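(* For every $Q\subset\mathrm{EX}(M)$ and every $(\alpha,U)\in S_Q$, the restriction $q|_{N_{(\alpha,U)}}:N_{(\alpha,U)}\to q(N_{(\alpha,U)})$ is a homeomorphism onto its image.
   Context: Conventions: $M$ is an $n$-dimensional smooth manifold (Hausdorff, second countable) with maximal $C^\infty$ atlas $\mathcal{A}(M)$; every chart $\alpha$ has open domain $\mathrm{dom}(\alpha)\subset M$ and open range $\mathrm{ran}(\alpha)\subset\mathbb{R}^n$. For $A\subset\mathbb{R}^n$, $\partial A$ is its boundary in $\mathbb{R}^n$; for $A\subset U\subset\mathbb{R}^n$, $\partial_U A$ is the boundary of $A$ relative to $U$. An admissible boundary point of $\alpha$ is a $p\in\partial\,\mathrm{ran}(\alpha)$ such that every sequence $(x_i)\subset\mathrm{dom}(\alpha)$ with $\alpha(x_i)\to p$ has no accumulation point in $M$; $B(\alpha)$ is the set of these. An extension is a pair $(\alpha,U)$, $U\subset\mathbb{R}^n$ open, $\mathrm{ran}(\alpha)\subset U$, $\emptyset\ne\partial_U\mathrm{ran}(\alpha)\subset B(\alpha)$; $\mathrm{EX}(M)$ is the set of extensions. A boundary set is $(\alpha,U,V)$ with $(\alpha,U)\in\mathrm{EX}(M)$, $V\subset B(\alpha)\cap U$ (a boundary point if $V=\{p\}$). $(\alpha,U,V)$ covers $(\beta,X,Y)$ if for every sequence $(y_i)\subset\mathrm{dom}(\beta)$ with $(\beta(y_i))$ having an accumulation point in $Y$ there is a subsequence $(v_i)\subset\mathrm{dom}(\alpha)$ of $(y_i)$ with $(\alpha(v_i))$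 having an accumulation point in $V$; they are equivalent, $\equiv$, if each covers the other. Completion: for $Q\subset\mathrm{EX}(M)$ let $P=\{(\alpha,\mathrm{ran}(\alpha)):\alpha\in\mathcal{A}(M)\}$, $S_Q=P\cup Q$, $N_{(\alpha,U)}=\mathrm{ran}(\alpha)\cup\partial_U\mathrm{ran}(\alpha)$ with subspace topology of $\mathbb{R}^n$, $N_Q=\bigsqcup_{(\alpha,U)\in S_Q}N_{(\alpha,U)}$ with disjoint-union topology. Identify $x\in N_{(\alpha,U)}$ with $y\in N_{(\beta,X)}$ iff either $x\in\mathrm{ran}(\alpha)$, $y\in\mathrm{ran}(\beta)$, $\beta\circ\alpha^{-1}(x)=y$, or $x\in\partial_U\mathrm{ran}(\alpha)$, $y\in\partial_X\mathrm{ran}(\beta)$, $(\alpha,U,\{x\})\equiv(\beta,X,\{y\})$. $Q(M)$ is the quotient space with the quotient topology and $q:N_Q\to Q(M)$ the quotient map. *)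

theory Defs
  imports "HOL-Analysis.Analysis"
begin

text \<open>D vs is the iterated partial derivative along the
basis vectors listed in vs (the head being the last differentiation).\<close>
definition smooth_on :: "'a::euclidean_space set \<Rightarrow> ('a \<Rightarrow> 'b::real_normed_vector) \<Rightarrow> bool" where
  "smooth_on S f \<longleftrightarrow>
     (\<exists>D :: 'a list \<Rightarrow> 'a \<Rightarrow> 'b.
        (\<forall>x\<in>S. D [] x = f x) \<and>
        (\<forall>vs. \<forall>x\<in>S. (D vs has_derivative (\<lambda>h. \<Sum>b\<in>Basis. (h \<bullet> b) *\<^sub>R D (b # vs) x)) (at x)))"

text \<open>A chart on the manifold (the type 'm with its topology) modelled on the
Euclidean space 'e (= R^n, n = DIM('e)): a domain together with a map, taken
to be undefined outside its domain (i.e. a partial map).\<close>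
type_synonym ('m, 'e) chart = "'m set \<times> ('m \<Rightarrow> 'e)"

definition cdom :: "('m, 'e) chart \<Rightarrow> 'm set" where
  "cdom c = fst c"

definition cran :: "('m, 'e) chart \<Rightarrow> 'e set" where
  "cran c = snd c ` fst c"

definition cinv :: "('m, 'e) chart \<Rightarrow> 'e \<Rightarrow> 'm" where
  "cinv c = inv_into (fst c) (snd c)"

definition is_chart :: "('m::topological_space, 'e::euclidean_space) chart \<Rightarrow> bool" where
  "is_chart c \<longleftrightarrow> open (cdom c) \<and> open (cran c) \<and>
     (\<exists>g. homeomorphism (cdom c) (cran c) (snd c) g) \<and>
     (\<forall>x. x \<notin> cdom c \<longrightarrow> snd c x = undefined)"

definition smooth_compat :: "('m, 'e::euclidean_space) chart \<Rightarrow> ('m, 'e) chart \<Rightarrow> bool" where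
  "smooth_compat c1 c2 \<longleftrightarrow>
     smooth_on (snd c1 ` (cdom c1 \<inter> cdom c2)) (\<lambda>x. snd c2 (cinv c1 x))"

definition maximal_smooth_atlas :: "('m::topological_space, 'e::euclidean_space) chart set \<Rightarrow> bool" where
  "maximal_smooth_atlas A \<longleftrightarrow>
     (\<forall>c\<in>A. is_chart c) \<and>
     (\<Union>c\<in>A. cdom c) = UNIV \<and>
     (\<forall>c1\<in>A. \<forall>c2\<in>A. smooth_compat c1 c2) \<and>
     (\<forall>c. is_chart c \<and> (\<forall>c'\<in>A. smooth_compat c c' \<and> smooth_compat c' c) \<longrightarrow> c \<in> A)"

definition seq_accum :: "(nat \<Rightarrow> 'a::topological_space) \<Rightarrow> 'a \<Rightarrow> bool" where
  "seq_accum x p \<longleftrightarrow> (\<exists>r. strict_mono r \<and> (x \<circ> r) \<longlonglongrightarrow> p)"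

definition has_accum :: "(nat \<Rightarrow> 'a::topological_space) \<Rightarrow> bool" where
  "has_accum x \<longleftrightarrow> (\<exists>p. seq_accum x p)"

definition rel_bdry :: "'e::euclidean_space set \<Rightarrow> 'e set \<Rightarrow> 'e set" where
  "rel_bdry U S = (top_of_set U) frontier_of S"

definition admissible_bdry :: "('m::topological_space, 'e::euclidean_space) chart \<Rightarrow> 'e \<Rightarrow> bool" where
  "admissible_bdry c p \<longleftrightarrow> p \<in> frontier (cran c) \<and>
     (\<forall>x :: nat \<Rightarrow> 'm. (\<forall>i. x i \<in> cdom c) \<and> ((\<lambda>i. snd c (x i)) \<longlonglongrightarrow> p) \<longrightarrow> \<not> has_accum x)"

definition Bset :: "('m::topological_space, 'e::euclidean_space) chart \<Rightarrow> 'e set" where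
  "Bset c = {p. admissible_bdry c p}"

definition EXT :: "('m::topological_space, 'e::euclidean_space) chart set \<Rightarrow> (('m, 'e) chart \<times> 'e set) set" where
  "EXT A = {(c, U). c \<in> A \<and> open U \<and> cran c \<subseteq> U \<and>
            rel_bdry U (cran c) \<noteq> {} \<and> rel_bdry U (cran c) \<subseteq> Bset c}"

definition boundary_set :: "('m::topological_space, 'e::euclidean_space) chart set \<Rightarrow> ('m, 'e) chart \<Rightarrow> 'e set \<Rightarrow> 'e set \<Rightarrow> bool" where
  "boundary_set A c U V \<longleftrightarrow> (c, U) \<in> EXT A \<and> V \<subseteq> Bset c \<inter> U"

definition covers :: "('m::topological_space, 'e::euclidean_space) chart \<times> 'e set \<times> 'e set \<Rightarrow> ('m, 'e) chart \<times> 'e set \<times> 'e set \<Rightarrow> bool" where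
  "covers a b \<longleftrightarrow> (case a of (c, U, V) \<Rightarrow> case b of (d, X, Y) \<Rightarrow>
     (\<forall>y :: nat \<Rightarrow> 'm. (\<forall>i. y i \<in> cdom d) \<and> (\<exists>p\<in>Y. seq_accum (\<lambda>i. snd d (y i)) p) \<longrightarrow>
        (\<exists>r. strict_mono r \<and> (\<forall>i. y (r i) \<in> cdom c) \<and>
             (\<exists>p\<in>V. seq_accum (\<lambda>i. snd c (y (r i))) p))))"

definition bs_equiv :: "('m::topological_space, 'e::euclidean_space) chart \<times> 'e set \<times> 'e set \<Rightarrow> ('m, 'e) chart \<times> 'e set \<times> 'e set \<Rightarrow> bool" where
  "bs_equiv a b \<longleftrightarrow> covers a b \<and> covers b a"

definition quot_class :: "'a topology \<Rightarrow> ('a \<Rightarrow> 'a \<Rightarrow> bool) \<Rightarrow> 'a \<Rightarrow> 'a set" where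
  "quot_class X R z = {w \<in> topspace X. R z w}"

definition quot_open :: "'a topology \<Rightarrow> ('a \<Rightarrow> 'a \<Rightarrow> bool) \<Rightarrow> 'a set set \<Rightarrow> bool" where
  "quot_open X R W \<longleftrightarrow> W \<subseteq> quot_class X R ` topspace X \<and>
     openin X {z \<in> topspace X. quot_class X R z \<in> W}"

lemma istopology_quot_open: "istopology (quot_open X R)"
proof -
  have i: "quot_open X R (S \<inter> T)" if "quot_open X R S" "quot_open X R T" for S T
  proof -
    have "{z \<in> topspace X. quot_class X R z \<in> S \<inter> T} =
          {z \<in> topspace X. quot_class X R z \<in> S} \<inter> {z \<in> topspace X. quot_class X R z \<in> T}" by blast
    then show ?thesis using that unfolding quot_open_def by (auto simp: openin_Int)
  qed
  have u: "quot_open X R (\<Union>K)" if "\<forall>S\<in>K. quot_open X R S" for K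
  proof -
    have "{z \<in> topspace X. quot_class X R z \<in> \<Union>K} = (\<Union>S\<in>K. {z \<in> topspace X. quot_class X R z \<in> S})" by blast
    then show ?thesis using that unfolding quot_open_def by (auto intro!: openin_Union)
  qed
  show ?thesis unfolding istopology_def using i u by blast
qed

definition quotient_top :: "'a topology \<Rightarrow> ('a \<Rightarrow> 'a \<Rightarrow> bool) \<Rightarrow> 'a set topology" where
  "quotient_top X R = topology (quot_open X (equivclp R))"

definition quotient_map_of :: "'a topology \<Rightarrow> ('a \<Rightarrow> 'a \<Rightarrow> bool) \<Rightarrow> 'a \<Rightarrow> 'a set" where
  "quotient_map_of X R = quot_class X (equivclp R)"

definition Pset :: "('m::topological_space, 'e::euclidean_space) chart set \<Rightarrow> (('m, 'e) chart \<times> 'e set) set" where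
  "Pset A = {(c, cran c) | c. c \<in> A}"

definition SQ :: "('m::topological_space, 'e::euclidean_space) chart set \<Rightarrow> (('m, 'e) chart \<times> 'e set) set \<Rightarrow> (('m, 'e) chart \<times> 'e set) set" where
  "SQ A Q = Pset A \<union> Q"

definition Nset :: "('m, 'e::euclidean_space) chart \<times> 'e set \<Rightarrow> 'e set" where
  "Nset s = (case s of (c, U) \<Rightarrow> cran c \<union> rel_bdry U (cran c))"

definition NQ :: "('m::topological_space, 'e::euclidean_space) chart set \<Rightarrow> (('m, 'e) chart \<times> 'e set) set \<Rightarrow> ((('m, 'e) chart \<times> 'e set) \<times> 'e) topology" where
  "NQ A Q = sum_topology (\<lambda>s. top_of_set (Nset s)) (SQ A Q)"

definition ident :: "('m::topological_space, 'e::euclidean_space) chart set \<Rightarrow> (('m, 'e) chart \<times> 'e set) set \<Rightarrow>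
    (('m, 'e) chart \<times> 'e set) \<times> 'e \<Rightarrow> (('m, 'e) chart \<times> 'e set) \<times> 'e \<Rightarrow> bool" where
  "ident A Q z w \<longleftrightarrow> z \<in> topspace (NQ A Q) \<and> w \<in> topspace (NQ A Q) \<and>
     (case z of ((c, U), x) \<Rightarrow> case w of ((d, X), y) \<Rightarrow>
        (x \<in> cran c \<and> y \<in> cran d \<and> cinv c x \<in> cdom d \<and> snd d (cinv c x) = y) \<or>
        (x \<in> rel_bdry U (cran c) \<and> y \<in> rel_bdry X (cran d) \<and> bs_equiv (c, U, {x}) (d, X, {y})))"

definition QM :: "('m::topological_space, 'e::euclidean_space) chart set \<Rightarrow> (('m, 'e) chart \<times> 'e set) set \<Rightarrow> ((('m, 'e) chart \<times> 'e set) \<times> 'e) set topology" where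
  "QM A Q = quotient_top (NQ A Q) (ident A Q)"

definition qmap :: "('m::topological_space, 'e::euclidean_space) chart set \<Rightarrow> (('m, 'e) chart \<times> 'e set) set \<Rightarrow> (('m, 'e) chart \<times> 'e set) \<times> 'e \<Rightarrow> ((('m, 'e) chart \<times> 'e set) \<times> 'e) set" where
  "qmap A Q = quotient_map_of (NQ A Q) (ident A Q)"

end

theory Submission
  imports Defs
begin


lemma rel_bdry_facts:
  fixes S U :: "'e::euclidean_space set"
  assumes "open S" "S \<subseteq> U"
  shows "rel_bdry U S \<inter> S = {}" "rel_bdry U S \<subseteq> closure S"
proof -
  have o: "openin (top_of_set U) S" using assms by (simp add: open_subset)
  have "rel_bdry U S = (top_of_set U) closure_of S - S"
    unfolding rel_bdry_def frontier_of_def using interior_of_openin[OF o] by simp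
  moreover have "(top_of_set U) closure_of S \<subseteq> closure S"
    using closure_mono[of "U \<inter> S" S] by (auto simp: closure_of_subtopology)
  ultimately show "rel_bdry U S \<inter> S = {}" "rel_bdry U S \<subseteq> closure S" by auto
qed

locale chartA =
  fixes c :: "('m::topological_space, 'e::euclidean_space) chart"
  assumes ch: "is_chart c"
begin
lemma opens: "open (cdom c)" "open (cran c)" using ch by (auto simp: is_chart_def)
lemma inv1: "x \<in> cran c \<Longrightarrow> cinv c x \<in> cdom c \<and> snd c (cinv c x) = x"
  unfolding cinv_def cran_def cdom_def by (auto intro: inv_into_into f_inv_into_f)
lemma img: "m \<in> cdom c \<Longrightarrow> snd c m \<in> cran c" unfolding cran_def cdom_def by auto
lemma inv2: "m \<in> cdom c \<Longrightarrow> cinv c (snd c m) = m"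
proof -
  assume m: "m \<in> cdom c"
  obtain g where h: "homeomorphism (cdom c) (cran c) (snd c) g" using ch by (auto simp: is_chart_def)
  then have "inj_on (snd c) (fst c)" unfolding cdom_def by (metis homeomorphism_apply1 inj_on_inverseI)
  then show ?thesis using m unfolding cinv_def cdom_def by simp
qed
lemma cont: "continuous_on (cdom c) (snd c)" "continuous_on (cran c) (cinv c)"
proof -
  obtain g where h: "homeomorphism (cdom c) (cran c) (snd c) g" using ch by (auto simp: is_chart_def)
  show "continuous_on (cdom c) (snd c)" using h by (simp add: homeomorphism_def)
  have "\<forall>x\<in>cran c. cinv c x = g x" using h inv2 inv1
    by (metis homeomorphism_apply2 homeomorphism_image2 imageI)
  then show "continuous_on (cran c) (cinv c)" using h
    by (metis continuous_on_cong homeomorphism_def)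
qed
end



lemma covers_refl: "covers (c, U, V) (c, U, V)"
  unfolding covers_def by (auto intro!: exI[of _ id] simp: strict_mono_def)

lemma covers_trans:
  assumes "covers (c, U, V) (d, X, Y)" "covers (d, X, Y) (e, Z, W)"
  shows "covers (c, U, V) (e, Z, W)"
  unfolding covers_def
proof (simp, intro allI impI, elim conjE)
  fix y :: "nat \<Rightarrow> 'a" assume y: "\<forall>i. y i \<in> cdom e" "\<exists>p\<in>W. seq_accum (\<lambda>i. snd e (y i)) p"
  obtain r where r: "strict_mono r" "\<forall>i. y (r i) \<in> cdom d" "\<exists>p\<in>Y. seq_accum (\<lambda>i. snd d (y (r i))) p"
  proof -
    have "\<forall>y. (\<forall>i. y i \<in> cdom e) \<and> (\<exists>p\<in>W. seq_accum (\<lambda>i. snd e (y i)) p) \<longrightarrow>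
        (\<exists>r. strict_mono r \<and> (\<forall>i. y (r i) \<in> cdom d) \<and> (\<exists>p\<in>Y. seq_accum (\<lambda>i. snd d (y (r i))) p))"
      using assms(2) unfolding covers_def by simp
    then show ?thesis using y that by blast
  qed
  obtain r' where r': "strict_mono r'" "\<forall>i. y (r (r' i)) \<in> cdom c" "\<exists>p\<in>V. seq_accum (\<lambda>i. snd c (y (r (r' i)))) p"
  proof -
    have "\<forall>y. (\<forall>i. y i \<in> cdom d) \<and> (\<exists>p\<in>Y. seq_accum (\<lambda>i. snd d (y i)) p) \<longrightarrow>
        (\<exists>r. strict_mono r \<and> (\<forall>i. y (r i) \<in> cdom c) \<and> (\<exists>p\<in>V. seq_accum (\<lambda>i. snd c (y (r i))) p))"
      using assms(1) unfolding covers_def by simp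
    from spec[OF this, of "\<lambda>i. y (r i)"] show ?thesis using r(2,3) that by blast
  qed
  show "\<exists>r. strict_mono r \<and> (\<forall>i. y (r i) \<in> cdom c) \<and> (\<exists>p\<in>V. seq_accum (\<lambda>i. snd c (y (r i))) p)"
    by (rule exI[of _ "r \<circ> r'"]) (use r r' in \<open>auto intro: strict_mono_o\<close>)
qed

lemma bs_equiv_refl: "bs_equiv a a"
  unfolding bs_equiv_def by (cases a) (auto intro: covers_refl)
lemma bs_equiv_sym: "bs_equiv a b \<Longrightarrow> bs_equiv b a"
  unfolding bs_equiv_def by auto
lemma bs_equiv_trans: "bs_equiv a b \<Longrightarrow> bs_equiv b c \<Longrightarrow> bs_equiv a c"
  unfolding bs_equiv_def by (cases a; cases b; cases c) (auto intro: covers_trans)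



locale compl =
  fixes A :: "('m::{t2_space,second_countable_topology}, 'e::euclidean_space) chart set"
    and Q :: "(('m, 'e) chart \<times> 'e set) set"
  assumes atlas: "maximal_smooth_atlas A" and QE: "Q \<subseteq> EXT A"
begin

lemma SQ_chart: "(c, U) \<in> SQ A Q \<Longrightarrow> c \<in> A \<and> cran c \<subseteq> U"
proof -
  assume "(c, U) \<in> SQ A Q"
  then consider "(c, U) \<in> Pset A" | "(c, U) \<in> Q" unfolding SQ_def by blast
  then show ?thesis
  proof cases
    case 1 then show ?thesis unfolding Pset_def by blast
  next
    case 2 then have "(c, U) \<in> EXT A" using QE by blast
    then show ?thesis unfolding EXT_def by blast
  qed
qed

lemma chart: "c \<in> A \<Longrightarrow> chartA c"
  using atlas unfolding maximal_smooth_atlas_def chartA_def by blast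

lemma top: "topspace (NQ A Q) = Sigma (SQ A Q) Nset"
  by (simp add: NQ_def o_def)

lemma Nset_facts:
  assumes "(c, U) \<in> SQ A Q"
  shows "Nset (c, U) = cran c \<union> rel_bdry U (cran c)"
    "rel_bdry U (cran c) \<inter> cran c = {}" "rel_bdry U (cran c) \<subseteq> closure (cran c)"
proof -
  have "c \<in> A" "cran c \<subseteq> U" using SQ_chart[OF assms] by blast+
  then have "open (cran c)" using chartA.opens[OF chart] by blast
  then show "rel_bdry U (cran c) \<inter> cran c = {}" "rel_bdry U (cran c) \<subseteq> closure (cran c)"
    using rel_bdry_facts[of "cran c" U] \<open>cran c \<subseteq> U\<close> by blast+
  show "Nset (c, U) = cran c \<union> rel_bdry U (cran c)" by (simp add: Nset_def)
qed

lemma ident_sym: "ident A Q z w \<Longrightarrow> ident A Q w z"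
proof -
  assume h: "ident A Q z w"
  obtain c U x d X y where zw: "z = ((c, U), x)" "w = ((d, X), y)" by (metis prod.collapse)
  have "(c,U) \<in> SQ A Q" "(d,X) \<in> SQ A Q" using h zw top unfolding ident_def by auto
  then have c: "chartA c" "chartA d" using SQ_chart chart by blast+
  have "(y \<in> cran d \<and> x \<in> cran c \<and> cinv d y \<in> cdom c \<and> snd c (cinv d y) = x)"
    if "x \<in> cran c" "y \<in> cran d" "cinv c x \<in> cdom d" "snd d (cinv c x) = y"
    using that chartA.inv1[OF c(1)] chartA.inv2[OF c(2)] by auto
  moreover have "bs_equiv (d, X, {y}) (c, U, {x})" if "bs_equiv (c, U, {x}) (d, X, {y})"
    using that bs_equiv_sym by blast
  ultimately show ?thesis using h unfolding zw ident_def by (simp only: prod.case) blast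
qed

definition Inv where
  "Inv z w \<longleftrightarrow> (case z of ((c, U), x) \<Rightarrow> case w of ((d, X), y) \<Rightarrow>
     (x \<in> cran c \<longrightarrow> y \<in> cran d \<and> cinv d y = cinv c x) \<and>
     (x \<notin> cran c \<longrightarrow> y \<in> rel_bdry X (cran d) \<and> bs_equiv (c, U, {x}) (d, X, {y})))"

lemma Inv_lemma:
  assumes "equivclp (ident A Q) z w" "z \<in> topspace (NQ A Q)"
  shows "w \<in> topspace (NQ A Q) \<and> Inv z w"
proof -
  obtain c U x where z: "z = ((c, U), x)" by (metis prod.collapse)
  have cU: "(c,U) \<in> SQ A Q" "x \<in> Nset (c,U)" using assms(2) z top by auto
  have "(symclp (ident A Q))\<^sup>*\<^sup>* z w" using assms(1) by (simp add: equivclp_def)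
  then show ?thesis
  proof (induction rule: rtranclp_induct)
    case base
    have "x \<notin> cran c \<Longrightarrow> x \<in> rel_bdry U (cran c)" using cU Nset_facts(1)[OF cU(1)] by blast
    moreover have "bs_equiv (c, U, {x}) (c, U, {x})" by (rule bs_equiv_refl)
    ultimately show ?case using assms(2) unfolding Inv_def z by simp
  next
    case (step w w')
    then have i: "ident A Q w w'" by (auto simp: symclp_def intro: ident_sym)
    obtain d X y e Z u where zw: "w = ((d, X), y)" "w' = ((e, Z), u)"
      by (metis prod.collapse)
    have cs: "(d,X) \<in> SQ A Q" "(e,Z) \<in> SQ A Q"
      using i zw unfolding ident_def top by auto
    have ch: "chartA e" using cs SQ_chart chart by blast+
    have w': "w' \<in> topspace (NQ A Q)" using i unfolding ident_def by auto
    have IH: "(x \<in> cran c \<longrightarrow> y \<in> cran d \<and> cinv d y = cinv c x) \<and>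
     (x \<notin> cran c \<longrightarrow> y \<in> rel_bdry X (cran d) \<and> bs_equiv (c, U, {x}) (d, X, {y}))"
      using step.IH unfolding Inv_def z zw by simp
    have I: "(y \<in> cran d \<and> u \<in> cran e \<and> cinv d y \<in> cdom e \<and> snd e (cinv d y) = u) \<or>
        (y \<in> rel_bdry X (cran d) \<and> u \<in> rel_bdry Z (cran e) \<and> bs_equiv (d, X, {y}) (e, Z, {u}))"
      using i unfolding zw ident_def by simp
    have D: "rel_bdry X (cran d) \<inter> cran d = {}" using Nset_facts(2)[OF cs(1)] .
    have "(x \<in> cran c \<longrightarrow> u \<in> cran e \<and> cinv e u = cinv c x) \<and>
     (x \<notin> cran c \<longrightarrow> u \<in> rel_bdry Z (cran e) \<and> bs_equiv (c, U, {x}) (e, Z, {u}))"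
    proof (cases "x \<in> cran c")
      case True
      then have "y \<in> cran d" "cinv d y = cinv c x" using IH by auto
      then have "u \<in> cran e \<and> cinv d y \<in> cdom e \<and> snd e (cinv d y) = u" using I D by blast
      then show ?thesis using chartA.inv2[OF ch] \<open>cinv d y = cinv c x\<close> True by metis
    next
      case False
      then have "y \<in> rel_bdry X (cran d)" "bs_equiv (c, U, {x}) (d, X, {y})" using IH by auto
      then show ?thesis using I D False bs_equiv_trans by blast
    qed
    then have "Inv z w'" unfolding Inv_def z zw by simp
    then show ?case using w' by simp
  qed
qed

lemma covers_point:
  assumes "covers (c, U, {x}) (d, X, {y})" "\<forall>i. a i \<in> cdom d" "(\<lambda>i. snd d (a i)) \<longlonglongrightarrow> y"
  shows "\<exists>r. strict_mono r \<and> (\<forall>i. a (r i) \<in> cdom c) \<and> ((\<lambda>i. snd c (a (r i))) \<longlonglongrightarrow> x)"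
proof -
  have "seq_accum (\<lambda>i. snd d (a i)) y" unfolding seq_accum_def
    by (rule exI[of _ id]) (use assms(3) in \<open>auto simp: strict_mono_def o_def\<close>)
  then obtain r where r: "strict_mono r" "\<forall>i. a (r i) \<in> cdom c" "seq_accum (\<lambda>i. snd c (a (r i))) x"
    using assms(1,2) unfolding covers_def by auto
  then obtain r' where r': "strict_mono r'" "((\<lambda>i. snd c (a (r i))) \<circ> r') \<longlonglongrightarrow> x"
    unfolding seq_accum_def by blast
  show ?thesis
    by (rule exI[of _ "r \<circ> r'"]) (use r r' strict_mono_o[OF r(1) r'(1)] in \<open>auto simp: o_def\<close>)
qed

lemma qmap_inj:
  assumes s: "(c, U) \<in> SQ A Q" and xy: "x \<in> Nset (c, U)" "y \<in> Nset (c, U)"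
    and eq: "qmap A Q ((c, U), x) = qmap A Q ((c, U), y)"
  shows "x = y"
proof -
  have ty: "((c, U), y) \<in> topspace (NQ A Q)" "((c, U), x) \<in> topspace (NQ A Q)" using s xy top by auto
  have "((c, U), y) \<in> qmap A Q ((c, U), y)"
    using ty unfolding qmap_def quotient_map_of_def quot_class_def by simp
  then have "((c, U), y) \<in> qmap A Q ((c, U), x)" using eq by simp
  then have "equivclp (ident A Q) ((c, U), x) ((c, U), y)"
    unfolding qmap_def quotient_map_of_def quot_class_def by simp
  from Inv_lemma[OF this ty(2)] have I: "Inv ((c, U), x) ((c, U), y)" by blast
  have ch: "chartA c" using s SQ_chart chart by blast
  show ?thesis
  proof (cases "x \<in> cran c")
    case True
    then have "y \<in> cran c" "cinv c y = cinv c x" using I unfolding Inv_def by simp_all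
    then show ?thesis using chartA.inv1[OF ch] True by metis
  next
    case False
    then have yb: "y \<in> rel_bdry U (cran c)" and be: "bs_equiv (c, U, {x}) (c, U, {y})"
      using I unfolding Inv_def by auto
    have "y \<in> closure (cran c)" using yb Nset_facts(3)[OF s] by blast
    then obtain a where a: "\<forall>n. a n \<in> cran c" "a \<longlonglongrightarrow> y" using closure_sequential by blast
    define b where "b i = cinv c (a i)" for i
    have b: "\<forall>i. b i \<in> cdom c" "(\<lambda>i. snd c (b i)) = a" using a(1) chartA.inv1[OF ch] unfolding b_def by auto
    obtain r where r: "strict_mono r" "(\<lambda>i. snd c (b (r i))) \<longlonglongrightarrow> x"
      using covers_point[OF _ b(1)] be b(2) a(2) unfolding bs_equiv_def by blast
    have "(\<lambda>i. a (r i)) \<longlonglongrightarrow> y" using LIMSEQ_subseq_LIMSEQ[OF a(2) r(1)] by (simp add: o_def)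
    moreover have e: "\<And>i. snd c (b i) = a i" using b(2) by (simp add: fun_eq_iff)
    have "(\<lambda>i. a (r i)) \<longlonglongrightarrow> x" using r(2) by (simp add: e)
    ultimately show ?thesis using LIMSEQ_unique by blast
  qed
qed

definition Oset :: "('m, 'e) chart \<Rightarrow> 'e set \<Rightarrow> 'e set \<Rightarrow> ((('m, 'e) chart \<times> 'e set) \<times> 'e) set" where
  "Oset c0 U0 V = {z \<in> topspace (NQ A Q). \<exists>K. closed K \<and> K \<inter> Nset (c0, U0) \<subseteq> V \<and>
     (\<exists>\<delta>>0. \<forall>y'\<in>Nset (fst z). dist y' (snd z) < \<delta> \<longrightarrow>
        (\<forall>x''\<in>Nset (c0, U0). equivclp (ident A Q) (fst z, y') ((c0, U0), x'') \<longrightarrow> x'' \<in> K))}"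

lemma seq_from_dist:
  fixes a :: "nat \<Rightarrow> 'e"
  assumes "\<forall>n. dist (a n) y < inverse (real (Suc n))"
  shows "a \<longlonglongrightarrow> y"
proof -
  have "\<forall>n. norm (dist (a n) y) \<le> inverse (real (Suc n))"
  proof
    fix n
    have "norm (dist (a n) y) = dist (a n) y" by simp
    moreover have "dist (a n) y < inverse (real (Suc n))" using assms by blast
    ultimately show "norm (dist (a n) y) \<le> inverse (real (Suc n))" by linarith
  qed
  then have "(\<lambda>n. dist (a n) y) \<longlonglongrightarrow> 0"
    by (rule Lim_null_comparison[OF always_eventually LIMSEQ_inverse_real_of_nat])
  then show ?thesis using tendsto_dist_iff[of a y sequentially] by blast
qed

lemma Oset_step:
  assumes s: "(c0, U0) \<in> SQ A Q" and i: "ident A Q z w" and zO: "z \<in> Oset c0 U0 V"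
  shows "w \<in> Oset c0 U0 V"
proof -
  obtain d X y e Z y' where zw: "z = ((d, X), y)" "w = ((e, Z), y')" by (metis prod.collapse)
  have cs: "(d, X) \<in> SQ A Q" "(e, Z) \<in> SQ A Q" "y \<in> Nset (d, X)" "y' \<in> Nset (e, Z)"
    using i zw unfolding ident_def top by auto
  have chd: "chartA d" using cs(1) SQ_chart chart by blast
  have che: "chartA e" using cs(2) SQ_chart chart by blast
  have wt: "w \<in> topspace (NQ A Q)" using cs zw top by auto
  obtain K \<delta> where K: "closed K" "K \<inter> Nset (c0, U0) \<subseteq> V" "\<delta> > 0"
    and Kd: "\<forall>y''\<in>Nset (d, X). dist y'' y < \<delta> \<longrightarrow>
        (\<forall>x''\<in>Nset (c0, U0). equivclp (ident A Q) ((d, X), y'') ((c0, U0), x'') \<longrightarrow> x'' \<in> K)"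
    using zO unfolding Oset_def zw by auto
  have I: "(y \<in> cran d \<and> y' \<in> cran e \<and> cinv d y \<in> cdom e \<and> snd e (cinv d y) = y') \<or>
     (y \<in> rel_bdry X (cran d) \<and> y' \<in> rel_bdry Z (cran e) \<and> bs_equiv (d, X, {y}) (e, Z, {y'}))"
    using i unfolding zw ident_def by simp
  have key: "\<exists>n. cinv e (a n) \<in> cdom d \<and> dist (snd d (cinv e (a n))) y < \<delta>"
    if a: "\<forall>n. a n \<in> cran e" "a \<longlonglongrightarrow> y'" for a
    using I
  proof
    assume h: "y \<in> cran d \<and> y' \<in> cran e \<and> cinv d y \<in> cdom e \<and> snd e (cinv d y) = y'"
    have m: "cinv d y \<in> cdom d" "snd d (cinv d y) = y" using chartA.inv1[OF chd] h by auto
    have ce: "cinv e y' = cinv d y" using h chartA.inv2[OF che, of "cinv d y"] by simp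
    have t1: "(\<lambda>n. cinv e (a n)) \<longlonglongrightarrow> cinv d y"
      using continuous_on_tendsto_compose[OF chartA.cont(2)[OF che] a(2)] h a(1) ce by auto
    have ev1: "eventually (\<lambda>n. cinv e (a n) \<in> cdom d) sequentially"
      using topological_tendstoD[OF t1 chartA.opens(1)[OF chd] m(1)] .
    have t2: "(\<lambda>n. snd d (cinv e (a n))) \<longlonglongrightarrow> y"
      using continuous_on_tendsto_compose[OF chartA.cont(1)[OF chd] t1 m(1) ev1] m(2) by simp
    have ev2: "eventually (\<lambda>n. dist (snd d (cinv e (a n))) y < \<delta>) sequentially"
      using tendstoD[OF t2 K(3)] .
    have "eventually (\<lambda>n. cinv e (a n) \<in> cdom d \<and> dist (snd d (cinv e (a n))) y < \<delta>) sequentially"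
      using ev1 ev2 by (rule eventually_conj)
    then obtain N where "\<forall>n\<ge>N. cinv e (a n) \<in> cdom d \<and> dist (snd d (cinv e (a n))) y < \<delta>"
      unfolding eventually_sequentially by blast
    then show ?thesis by blast
  next
    assume h: "y \<in> rel_bdry X (cran d) \<and> y' \<in> rel_bdry Z (cran e) \<and> bs_equiv (d, X, {y}) (e, Z, {y'})"
    then have cov: "covers (d, X, {y}) (e, Z, {y'})" unfolding bs_equiv_def by blast
    define g where "g n = cinv e (a n)" for n
    have g1: "\<forall>n. g n \<in> cdom e" using a(1) chartA.inv1[OF che] unfolding g_def by auto
    have g2: "\<And>n. snd e (g n) = a n" using a(1) chartA.inv1[OF che] unfolding g_def by auto
    obtain r where r: "strict_mono r" "\<forall>i. g (r i) \<in> cdom d" "(\<lambda>i. snd d (g (r i))) \<longlonglongrightarrow> y"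
      using covers_point[OF cov g1] g2 a(2) by auto
    have "eventually (\<lambda>i. dist (snd d (g (r i))) y < \<delta>) sequentially"
      using tendstoD[OF r(3) K(3)] .
    then obtain N where "\<forall>i\<ge>N. dist (snd d (g (r i))) y < \<delta>"
      unfolding eventually_sequentially by blast
    then have "dist (snd d (g (r N))) y < \<delta>" by blast
    then show ?thesis using r(2) unfolding g_def by blast
  qed
  have C: "\<exists>\<delta>'>0. \<forall>a\<in>cran e. dist a y' < \<delta>' \<longrightarrow>
      (\<exists>b\<in>Nset (d, X). dist b y < \<delta> \<and> equivclp (ident A Q) ((e, Z), a) ((d, X), b))"
  proof (rule ccontr)
    assume na: "\<not> ?thesis"
    have "\<exists>a. a \<in> cran e \<and> dist a y' < inverse (real (Suc n)) \<and>
        \<not> (\<exists>b\<in>Nset (d, X). dist b y < \<delta> \<and> equivclp (ident A Q) ((e, Z), a) ((d, X), b))" for n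
    proof -
      have "inverse (real (Suc n)) > 0" by simp
      then show ?thesis using na by blast
    qed
    then have "\<forall>n. \<exists>a. a \<in> cran e \<and> dist a y' < inverse (real (Suc n)) \<and>
        \<not> (\<exists>b\<in>Nset (d, X). dist b y < \<delta> \<and> equivclp (ident A Q) ((e, Z), a) ((d, X), b))" by blast
    from choice[OF this] obtain a where a: "\<forall>n. a n \<in> cran e \<and> dist (a n) y' < inverse (real (Suc n)) \<and>
        \<not> (\<exists>b\<in>Nset (d, X). dist b y < \<delta> \<and> equivclp (ident A Q) ((e, Z), a n) ((d, X), b))"
      by blast
    have "a \<longlonglongrightarrow> y'" using a seq_from_dist by blast
    then obtain n where n: "cinv e (a n) \<in> cdom d" "dist (snd d (cinv e (a n))) y < \<delta>"
      using key a by blast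
    define b where "b = snd d (cinv e (a n))"
    have bd: "b \<in> cran d" using chartA.img[OF chd] n(1) unfolding b_def by blast
    have an: "a n \<in> cran e" using a by blast
    have "ident A Q ((e, Z), a n) ((d, X), b)"
      unfolding ident_def using an bd n(1) cs(1,2) Nset_facts(1)[OF cs(1)] Nset_facts(1)[OF cs(2)]
      unfolding top b_def by simp
    then have eq: "equivclp (ident A Q) ((e, Z), a n) ((d, X), b)" by (rule r_into_equivclp)
    have bN: "b \<in> Nset (d, X)" using bd Nset_facts(1)[OF cs(1)] by blast
    have "dist b y < \<delta>" using n(2) unfolding b_def .
    then show False using a bN eq by blast
  qed
  then obtain \<delta>' where d': "\<delta>' > 0" "\<forall>a\<in>cran e. dist a y' < \<delta>' \<longrightarrow>
      (\<exists>b\<in>Nset (d, X). dist b y < \<delta> \<and> equivclp (ident A Q) ((e, Z), a) ((d, X), b))"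
    by blast
  have G: "x'' \<in> K" if G1: "a \<in> cran e" "dist a y' < \<delta>'" "x'' \<in> Nset (c0, U0)"
    "equivclp (ident A Q) ((e, Z), a) ((c0, U0), x'')" for a x''
  proof -
    obtain b where b: "b \<in> Nset (d, X)" "dist b y < \<delta>" "equivclp (ident A Q) ((e, Z), a) ((d, X), b)"
      using d'(2) G1(1,2) by blast
    have "equivclp (ident A Q) ((d, X), b) ((c0, U0), x'')"
      using equivclp_trans[OF equivclp_sym[OF b(3)] G1(4)] .
    then show ?thesis using Kd b G1(3) by blast
  qed
  have c0ch: "chartA c0" using s SQ_chart chart by blast
  have H: "x'' \<in> K" if y'': "y'' \<in> Nset (e, Z)" "dist y'' y' < \<delta>' / 2"
    and x'': "x'' \<in> Nset (c0, U0)" "equivclp (ident A Q) ((e, Z), y'') ((c0, U0), x'')" for y'' x''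
  proof (cases "y'' \<in> cran e")
    case True then show ?thesis using G y'' x'' d'(1) by auto
  next
    case False
    have tz: "((e, Z), y'') \<in> topspace (NQ A Q)" using cs y'' top by auto
    have "bs_equiv (e, Z, {y''}) (c0, U0, {x''})" using Inv_lemma[OF x''(2) tz] False unfolding Inv_def by auto
    then have cov: "covers (c0, U0, {x''}) (e, Z, {y''})" unfolding bs_equiv_def by blast
    have yb: "y'' \<in> rel_bdry Z (cran e)" using False y'' Nset_facts(1)[OF cs(2)] by blast
    then have "y'' \<in> closure (cran e)" using Nset_facts(3)[OF cs(2)] by blast
    moreover have "y'' \<in> ball y' (\<delta>' / 2)" using y''(2) by (simp add: dist_commute)
    ultimately have "y'' \<in> closure (ball y' (\<delta>' / 2) \<inter> cran e)"
      using open_Int_closure_subset[of "ball y' (\<delta>' / 2)" "cran e"] by blast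
    then obtain a where a: "\<forall>n. a n \<in> ball y' (\<delta>' / 2) \<inter> cran e" "a \<longlonglongrightarrow> y''"
      using closure_sequential by blast
    define g where "g n = cinv e (a n)" for n
    have g1: "\<forall>n. g n \<in> cdom e" using a(1) chartA.inv1[OF che] unfolding g_def by auto
    have g2: "\<And>n. snd e (g n) = a n" using a(1) chartA.inv1[OF che] unfolding g_def by auto
    obtain r where r: "strict_mono r" "\<forall>i. g (r i) \<in> cdom c0" "(\<lambda>i. snd c0 (g (r i))) \<longlonglongrightarrow> x''"
      using covers_point[OF cov g1] g2 a(2) by auto
    have inK: "snd c0 (g (r i)) \<in> K" for i
    proof -
      have v: "snd c0 (g (r i)) \<in> cran c0" using chartA.img[OF c0ch] r(2) by blast
      have vN: "snd c0 (g (r i)) \<in> Nset (c0, U0)" using v Nset_facts(1)[OF s] by blast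
      have aN: "a (r i) \<in> cran e" using a(1) by blast
      have aN2: "a (r i) \<in> Nset (e, Z)" using aN Nset_facts(1)[OF cs(2)] by blast
      have "ident A Q ((e, Z), a (r i)) ((c0, U0), snd c0 (g (r i)))"
        unfolding ident_def top using cs(2) s aN aN2 v vN r(2) unfolding g_def by simp
      then have "equivclp (ident A Q) ((e, Z), a (r i)) ((c0, U0), snd c0 (g (r i)))" by blast
      moreover have "dist (a (r i)) y' < \<delta>'"
      proof -
        have "dist y' (a (r i)) < \<delta>' / 2" using a(1) by auto
        then show ?thesis using d'(1) dist_commute[of y' "a (r i)"] by linarith
      qed
      ultimately show ?thesis using G aN vN by blast
    qed
    show ?thesis using closed_sequentially[OF K(1) inK r(3)] .
  qed
  have HH: "\<forall>y''\<in>Nset (e, Z). dist y'' y' < \<delta>' / 2 \<longrightarrow>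
      (\<forall>x''\<in>Nset (c0, U0). equivclp (ident A Q) ((e, Z), y'') ((c0, U0), x'') \<longrightarrow> x'' \<in> K)"
    using H by blast
  have pos: "\<delta>' / 2 > 0" using d'(1) by simp
  have "\<exists>K. closed K \<and> K \<inter> Nset (c0, U0) \<subseteq> V \<and>
     (\<exists>\<delta>>0. \<forall>y''\<in>Nset (e, Z). dist y'' y' < \<delta> \<longrightarrow>
        (\<forall>x''\<in>Nset (c0, U0). equivclp (ident A Q) ((e, Z), y'') ((c0, U0), x'') \<longrightarrow> x'' \<in> K))"
    using K(1,2) pos HH by blast
  then show ?thesis using wt unfolding Oset_def zw by simp
qed

lemma Oset_sat:
  assumes s: "(c0, U0) \<in> SQ A Q" and e: "equivclp (ident A Q) z w" and z: "z \<in> Oset c0 U0 V"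
  shows "w \<in> Oset c0 U0 V"
proof -
  have "(symclp (ident A Q))\<^sup>*\<^sup>* z w" using e by (simp add: equivclp_def)
  then show ?thesis
  proof (induction rule: rtranclp_induct)
    case base show ?case using z .
  next
    case (step w w')
    then have "ident A Q w w'" by (auto simp: symclp_def intro: ident_sym)
    then show ?case using Oset_step[OF s] step.IH by blast
  qed
qed

lemma Oset_sub: "Oset c0 U0 V \<subseteq> topspace (NQ A Q)"
  unfolding Oset_def by blast

lemma Oset_open:
  shows "openin (NQ A Q) (Oset c0 U0 V)"
  unfolding NQ_def openin_sum_topology
proof (intro conjI ballI)
  have "Oset c0 U0 V \<subseteq> Sigma (SQ A Q) Nset" using Oset_sub top by blast
  then show "Oset c0 U0 V \<subseteq> Sigma (SQ A Q) (topspace \<circ> (\<lambda>s. top_of_set (Nset s)))"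
    by (simp add: o_def)
  fix t assume t: "t \<in> SQ A Q"
  show "openin (top_of_set (Nset t)) {x. (t, x) \<in> Oset c0 U0 V}"
    unfolding openin_euclidean_subtopology_iff
  proof (intro conjI ballI)
    show "{x. (t, x) \<in> Oset c0 U0 V} \<subseteq> Nset t" using Oset_sub top by blast
    fix x assume "x \<in> {x. (t, x) \<in> Oset c0 U0 V}"
    then obtain K \<delta> where KK: "closed K" "K \<inter> Nset (c0, U0) \<subseteq> V" "\<delta> > 0"
      "\<forall>y'\<in>Nset t. dist y' x < \<delta> \<longrightarrow>
        (\<forall>x''\<in>Nset (c0, U0). equivclp (ident A Q) (t, y') ((c0, U0), x'') \<longrightarrow> x'' \<in> K)"
      unfolding Oset_def by auto
    show "\<exists>e>0. \<forall>x'\<in>Nset t. dist x' x < e \<longrightarrow> x' \<in> {x. (t, x) \<in> Oset c0 U0 V}"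
    proof (intro exI[of _ "\<delta> / 2"] conjI ballI impI)
      show "\<delta> / 2 > 0" using KK by simp
      fix x' assume x': "x' \<in> Nset t" "dist x' x < \<delta> / 2"
      have "\<forall>y'\<in>Nset t. dist y' x' < \<delta> / 2 \<longrightarrow>
        (\<forall>x''\<in>Nset (c0, U0). equivclp (ident A Q) (t, y') ((c0, U0), x'') \<longrightarrow> x'' \<in> K)"
      proof (rule ballI, rule impI)
        fix y' assume y': "y' \<in> Nset t" "dist y' x' < \<delta> / 2"
        then have "dist y' x < \<delta>" using x'(2) dist_triangle[of y' x x'] by linarith
        then show "\<forall>x''\<in>Nset (c0, U0). equivclp (ident A Q) (t, y') ((c0, U0), x'') \<longrightarrow> x'' \<in> K"
          using KK(4) y'(1) by blast
      qed
      then have "\<exists>K. closed K \<and> K \<inter> Nset (c0, U0) \<subseteq> V \<and>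
         (\<exists>\<delta>>0. \<forall>y'\<in>Nset t. dist y' x' < \<delta> \<longrightarrow>
          (\<forall>x''\<in>Nset (c0, U0). equivclp (ident A Q) (t, y') ((c0, U0), x'') \<longrightarrow> x'' \<in> K))"
        using KK(1,2,3) by (intro exI[of _ K] conjI exI[of _ "\<delta> / 2"]) auto
      moreover have "(t, x') \<in> topspace (NQ A Q)" using t x' top by auto
      ultimately show "x' \<in> {x. (t, x) \<in> Oset c0 U0 V}" unfolding Oset_def by simp
    qed
  qed
qed

lemma eqv_same:
  assumes s: "(c, U) \<in> SQ A Q" and xy: "x \<in> Nset (c, U)" "y \<in> Nset (c, U)"
    and e: "equivclp (ident A Q) ((c, U), x) ((c, U), y)"
  shows "x = y"
proof (rule qmap_inj[OF s xy])
  have 1: "equivclp (ident A Q) ((c, U), y) w" if "equivclp (ident A Q) ((c, U), x) w" for w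
    using equivclp_trans[OF equivclp_sym[OF e] that] .
  have 2: "equivclp (ident A Q) ((c, U), x) w" if "equivclp (ident A Q) ((c, U), y) w" for w
    using equivclp_trans[OF e that] .
  show "qmap A Q ((c, U), x) = qmap A Q ((c, U), y)"
    unfolding qmap_def quotient_map_of_def quot_class_def using 1 2 by blast
qed

lemma openin_QM: "openin (QM A Q) W \<longleftrightarrow> quot_open (NQ A Q) (equivclp (ident A Q)) W"
  unfolding QM_def quotient_top_def by (simp add: istopology_quot_open)

lemma topspace_QM: "topspace (QM A Q) = qmap A Q ` topspace (NQ A Q)"
proof
  show "topspace (QM A Q) \<subseteq> qmap A Q ` topspace (NQ A Q)"
    unfolding topspace_def[of "QM A Q"] openin_QM quot_open_def qmap_def quotient_map_of_def by blast
  have "openin (QM A Q) (qmap A Q ` topspace (NQ A Q))"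
  proof -
    have "{z \<in> topspace (NQ A Q). quot_class (NQ A Q) (equivclp (ident A Q)) z
       \<in> quot_class (NQ A Q) (equivclp (ident A Q)) ` topspace (NQ A Q)} = topspace (NQ A Q)" by blast
    then show ?thesis unfolding openin_QM quot_open_def qmap_def quotient_map_of_def by simp
  qed
  then show "qmap A Q ` topspace (NQ A Q) \<subseteq> topspace (QM A Q)" by (rule openin_subset)
qed

lemma qmap_cont: "continuous_map (NQ A Q) (QM A Q) (qmap A Q)"
  unfolding continuous_map_def topspace_QM openin_QM quot_open_def
  by (auto simp: qmap_def quotient_map_of_def)

lemma qmap_self: "z \<in> topspace (NQ A Q) \<Longrightarrow> z \<in> qmap A Q z"
  unfolding qmap_def quotient_map_of_def quot_class_def by simp

lemma Oset_qsat:
  assumes s: "(c0, U0) \<in> SQ A Q" and z: "z \<in> topspace (NQ A Q)" and w0: "w0 \<in> Oset c0 U0 V"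
    and eq: "qmap A Q z = qmap A Q w0"
  shows "z \<in> Oset c0 U0 V"
proof -
  have "z \<in> qmap A Q w0" using qmap_self[OF z] eq by simp
  then have "equivclp (ident A Q) w0 z" unfolding qmap_def quotient_map_of_def quot_class_def by simp
  then show ?thesis using Oset_sat[OF s _ w0] by blast
qed

lemma V_in_O:
  assumes s: "(c0, U0) \<in> SQ A Q" and V: "openin (top_of_set (Nset (c0, U0))) V" and x: "x \<in> V"
  shows "((c0, U0), x) \<in> Oset c0 U0 V"
proof -
  obtain e where e: "e > 0" "\<forall>x'\<in>Nset (c0, U0). dist x' x < e \<longrightarrow> x' \<in> V"
    using V x unfolding openin_euclidean_subtopology_iff by blast
  have xN: "x \<in> Nset (c0, U0)" using V x openin_subset by fastforce
  have "\<forall>y'\<in>Nset (c0, U0). dist y' x < e / 2 \<longrightarrow>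
     (\<forall>x''\<in>Nset (c0, U0). equivclp (ident A Q) ((c0, U0), y') ((c0, U0), x'') \<longrightarrow> x'' \<in> cball x (e / 2))"
  proof (intro ballI impI)
    fix y' x'' assume h: "y' \<in> Nset (c0, U0)" "dist y' x < e / 2" "x'' \<in> Nset (c0, U0)"
      "equivclp (ident A Q) ((c0, U0), y') ((c0, U0), x'')"
    have "y' = x''" using eqv_same[OF s h(1) h(3) h(4)] .
    then show "x'' \<in> cball x (e / 2)" using h(2) by (simp add: dist_commute)
  qed
  moreover have "cball x (e / 2) \<inter> Nset (c0, U0) \<subseteq> V"
  proof
    fix x' assume "x' \<in> cball x (e / 2) \<inter> Nset (c0, U0)"
    then have "dist x' x < e" "x' \<in> Nset (c0, U0)" using e(1) by (auto simp: dist_commute)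
    then show "x' \<in> V" using e(2) by blast
  qed
  moreover have "((c0, U0), x) \<in> topspace (NQ A Q)" using s xN top by auto
  ultimately show ?thesis unfolding Oset_def using e(1)
    by (simp, intro exI[of _ "cball x (e / 2)"] conjI exI[of _ "e / 2"]) auto
qed

lemma O_in_V:
  assumes "((c0, U0), x) \<in> Oset c0 U0 V"
  shows "x \<in> V"
proof -
  obtain K \<delta> where KK: "closed K" "K \<inter> Nset (c0, U0) \<subseteq> V" "\<delta> > 0"
      "\<forall>y'\<in>Nset (c0, U0). dist y' x < \<delta> \<longrightarrow>
        (\<forall>x''\<in>Nset (c0, U0). equivclp (ident A Q) ((c0, U0), y') ((c0, U0), x'') \<longrightarrow> x'' \<in> K)"
    and t: "((c0, U0), x) \<in> topspace (NQ A Q)"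
    using assms unfolding Oset_def by auto
  have xN: "x \<in> Nset (c0, U0)" using t top by auto
  have "x \<in> K" using KK(3,4) xN by auto
  then show ?thesis using KK(2) xN by blast
qed

end

theorem mainTheorem16:
  fixes A :: "('m::{t2_space, second_countable_topology}, 'e::euclidean_space) chart set"
    and Q :: "(('m, 'e) chart \<times> 'e set) set"
    and s :: "('m, 'e) chart \<times> 'e set"
  assumes "maximal_smooth_atlas A"
    and "Q \<subseteq> EXT A"
    and "s \<in> SQ A Q"
  shows "homeomorphic_map (top_of_set (Nset s))
           (subtopology (QM A Q) ((\<lambda>x. qmap A Q (s, x)) ` Nset s))
           (\<lambda>x. qmap A Q (s, x))"
proof -
  interpret compl A Q using assms(1,2) by unfold_locales
  obtain c0 U0 where s: "s = (c0, U0)" by (cases s)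
  have sQ: "(c0, U0) \<in> SQ A Q" using assms(3) s by simp
  define f where "f = (\<lambda>x. qmap A Q ((c0, U0), x))"
  have fc: "continuous_map (top_of_set (Nset (c0, U0))) (QM A Q) f"
  proof -
    have "continuous_map ((\<lambda>s. top_of_set (Nset s)) (c0, U0)) (NQ A Q) (\<lambda>x. ((c0, U0), x))"
      unfolding NQ_def by (rule continuous_map_component_injection[OF sQ])
    then have "continuous_map (top_of_set (Nset (c0, U0))) (NQ A Q) (\<lambda>x. ((c0, U0), x))" by simp
    from continuous_map_compose[OF this qmap_cont] show ?thesis unfolding f_def o_def .
  qed
  have top_img: "f ` Nset (c0, U0) \<subseteq> topspace (QM A Q)"
    unfolding topspace_QM f_def using sQ top by auto
  have "homeomorphic_map (top_of_set (Nset (c0, U0))) (subtopology (QM A Q) (f ` Nset (c0, U0))) f"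
  proof (rule bijective_open_imp_homeomorphic_map)
    show "continuous_map (top_of_set (Nset (c0, U0))) (subtopology (QM A Q) (f ` Nset (c0, U0))) f"
      by (rule continuous_map_into_subtopology[OF fc]) auto
    show "f ` topspace (top_of_set (Nset (c0, U0))) = topspace (subtopology (QM A Q) (f ` Nset (c0, U0)))"
      using top_img by auto
    show "inj_on f (topspace (top_of_set (Nset (c0, U0))))"
      unfolding f_def inj_on_def using qmap_inj[OF sQ] by simp
    show "open_map (top_of_set (Nset (c0, U0))) (subtopology (QM A Q) (f ` Nset (c0, U0))) f"
      unfolding open_map_def
    proof (intro allI impI)
      fix V assume V: "openin (top_of_set (Nset (c0, U0))) V"
      have VN: "V \<subseteq> Nset (c0, U0)" using openin_subset[OF V] by simp
      let ?T = "qmap A Q ` Oset c0 U0 V"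
      have pre: "{z \<in> topspace (NQ A Q). qmap A Q z \<in> ?T} = Oset c0 U0 V"
        using Oset_qsat[OF sQ] Oset_sub by blast
      have "openin (QM A Q) ?T"
        unfolding openin_QM quot_open_def
      proof
        show "?T \<subseteq> quot_class (NQ A Q) (equivclp (ident A Q)) ` topspace (NQ A Q)"
          using Oset_sub unfolding qmap_def quotient_map_of_def by blast
        show "openin (NQ A Q) {z \<in> topspace (NQ A Q). quot_class (NQ A Q) (equivclp (ident A Q)) z \<in> ?T}"
          using pre Oset_open unfolding qmap_def quotient_map_of_def by simp
      qed
      moreover have "f ` V = ?T \<inter> f ` Nset (c0, U0)"
      proof
        show "f ` V \<subseteq> ?T \<inter> f ` Nset (c0, U0)"
          using V_in_O[OF sQ V] VN unfolding f_def by blast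
        show "?T \<inter> f ` Nset (c0, U0) \<subseteq> f ` V"
        proof
          fix y assume "y \<in> ?T \<inter> f ` Nset (c0, U0)"
          then obtain x w0 where x: "x \<in> Nset (c0, U0)" "y = f x" "w0 \<in> Oset c0 U0 V" "y = qmap A Q w0"
            by blast
          have "((c0, U0), x) \<in> topspace (NQ A Q)" using sQ x(1) top by auto
          then have "((c0, U0), x) \<in> Oset c0 U0 V"
            using Oset_qsat[OF sQ _ x(3)] x(2,4) unfolding f_def by simp
          then have "x \<in> V" by (rule O_in_V)
          then show "y \<in> f ` V" using x(2) by blast
        qed
      qed
      ultimately show "openin (subtopology (QM A Q) (f ` Nset (c0, U0))) (f ` V)"
        unfolding openin_subtopology by blast
    qed
  qed
  then show ?thesis unfolding s f_def .
qed

end
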